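(* Let $\mathbb{K}$ be a positive commutative monoid and let $R_1,\dots,R_m$ be a collection of $\mathbb{K}$-relations. The following are equivalent: (1) the collection is globally consistent; (2) the collection is globally consistent up to every cover of $\mathbb{K}$; (3) the collection is globally consistent up to some cover of $\mathbb{K}$.
   Context: Positive: $p+q=0\Rightarrow p=q=0$. For a finite attribute set $X$ (attributes have domains), a $\mathbb{K}$-relation over $X$ is a map $R$ from $X$-tuples to $K$ with finite support $R'$; $t[Y]$ is restriction; marginals $R[Y](t)=\sum_{r\in R',r[Y]=t}R(r)$. With $R_i$ over $X_i$, the collection is $k$-wise consistent if for every $q\le k$ and $i_1,\dots,i_q\in[m]$ some $\mathbb{K}$-relation $W$ over $X_{i_1}\cup\dots\cup X_{i_q}$ has $W[X_{i_j}]=R_{i_j}$ for all $j$; globally consistent means $m$-wise. A cover of $\mathbb{K}$ is a pair $(\mathbb{K}^*,h)$ with $\mathbb{K}^*$ a positive commutative monoid and $h:\mathbb{K}^*\to\mathbb{K}$ a surjective monoid homomorphism. An $h$-lift of a $\mathbb{K}$-relation $R$ over $Y$ is a $\mathbb{K}^*$-relation $R^*$ over $Y$ with $h(R^*(t))=R(t)$ for all $Y$-tuples $t$. The collection is $k$-wise (in particular globally) consistent up to the cover if there are $h$-lifts $R_1^*,\dots,R_m^*$ of $R_1,\dots,R_m$ forming a $k$-wise (globally) consistent collection of $\mathbb{K}^*$-relations. *)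

theory Defs
  imports Main
begin

definition positive_monoid :: "'k::comm_monoid_add itself \<Rightarrow> bool" where
  "positive_monoid _ \<longleftrightarrow> (\<forall>p q::'k. p + q = 0 \<longrightarrow> p = 0 \<and> q = 0)"

type_synonym ('a, 'v) tup = "'a \<Rightarrow> 'v option"

definition is_tuple :: "('a \<Rightarrow> 'v set) \<Rightarrow> 'a set \<Rightarrow> ('a, 'v) tup \<Rightarrow> bool" where
  "is_tuple Dom X t \<longleftrightarrow> dom t = X \<and> (\<forall>A\<in>X. the (t A) \<in> Dom A)"

definition supp :: "(('a, 'v) tup \<Rightarrow> 'k::zero) \<Rightarrow> ('a, 'v) tup set" where
  "supp R = {t. R t \<noteq> 0}"

definition is_krel :: "('a \<Rightarrow> 'v set) \<Rightarrow> 'a set \<Rightarrow> (('a, 'v) tup \<Rightarrow> 'k::zero) \<Rightarrow> bool" where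
  "is_krel Dom X R \<longleftrightarrow> finite X \<and> finite (supp R) \<and> (\<forall>t. \<not> is_tuple Dom X t \<longrightarrow> R t = 0)"

definition marg :: "(('a, 'v) tup \<Rightarrow> 'k::comm_monoid_add) \<Rightarrow> 'a set \<Rightarrow> ('a, 'v) tup \<Rightarrow> 'k" where
  "marg R Y t = (\<Sum>r\<in>{r\<in>supp R. r |` Y = t}. R r)"

definition kwise_consistent ::
  "nat \<Rightarrow> ('a \<Rightarrow> 'v set) \<Rightarrow> nat \<Rightarrow> (nat \<Rightarrow> 'a set) \<Rightarrow> (nat \<Rightarrow> ('a, 'v) tup \<Rightarrow> 'k::comm_monoid_add) \<Rightarrow> bool" where
  "kwise_consistent k Dom m X R \<longleftrightarrow>
     (\<forall>q \<le> k. \<forall>\<iota> :: nat \<Rightarrow> nat. (\<forall>j<q. \<iota> j < m) \<longrightarrow>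
        (\<exists>W. is_krel Dom (\<Union>j<q. X (\<iota> j)) W \<and> (\<forall>j<q. marg W (X (\<iota> j)) = R (\<iota> j))))"

definition globally_consistent ::
  "('a \<Rightarrow> 'v set) \<Rightarrow> nat \<Rightarrow> (nat \<Rightarrow> 'a set) \<Rightarrow> (nat \<Rightarrow> ('a, 'v) tup \<Rightarrow> 'k::comm_monoid_add) \<Rightarrow> bool" where
  "globally_consistent Dom m X R \<longleftrightarrow> kwise_consistent m Dom m X R"

definition is_cover :: "('b::comm_monoid_add \<Rightarrow> 'k::comm_monoid_add) \<Rightarrow> bool" where
  "is_cover h \<longleftrightarrow> positive_monoid TYPE('b) \<and> surj h \<and> h 0 = 0 \<and> (\<forall>x y. h (x + y) = h x + h y)"

definition is_lift ::
  "('b::comm_monoid_add \<Rightarrow> 'k::comm_monoid_add) \<Rightarrow> ('a \<Rightarrow> 'v set) \<Rightarrow> 'a set \<Rightarrow> (('a, 'v) tup \<Rightarrow> 'k) \<Rightarrow> (('a, 'v) tup \<Rightarrow> 'b) \<Rightarrow> bool" where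
  "is_lift h Dom Y R Rs \<longleftrightarrow> is_krel Dom Y Rs \<and> (\<forall>t. is_tuple Dom Y t \<longrightarrow> h (Rs t) = R t)"

definition globally_consistent_upto ::
  "('b::comm_monoid_add \<Rightarrow> 'k::comm_monoid_add) \<Rightarrow> ('a \<Rightarrow> 'v set) \<Rightarrow> nat \<Rightarrow> (nat \<Rightarrow> 'a set) \<Rightarrow> (nat \<Rightarrow> ('a, 'v) tup \<Rightarrow> 'k) \<Rightarrow> bool" where
  "globally_consistent_upto h Dom m X R \<longleftrightarrow>
     (\<exists>Rs :: nat \<Rightarrow> ('a, 'v) tup \<Rightarrow> 'b. (\<forall>i<m. is_lift h Dom (X i) (R i) (Rs i)) \<and> globally_consistent Dom m X Rs)"

end

theory Submission
  imports Defs
begin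

lemma marg_alt:
  assumes "finite S" "supp R \<subseteq> S"
  shows "marg R Y t = (\<Sum>r\<in>{r\<in>S. r |` Y = t}. R r)"
  unfolding marg_def
  by (rule sum.mono_neutral_left) (use assms in \<open>auto simp: supp_def\<close>)

lemma tuple_restrict:
  assumes "is_tuple Dom X r" "U \<subseteq> X"
  shows "is_tuple Dom U (r |` U)"
  using assms unfolding is_tuple_def by auto

lemma supp_marg:
  "supp (marg W U) \<subseteq> (\<lambda>r. r |` U) ` supp W"
proof
  fix t assume t: "t \<in> supp (marg W U)"
  show "t \<in> (\<lambda>r. r |` U) ` supp W"
  proof (rule ccontr)
    assume "t \<notin> (\<lambda>r. r |` U) ` supp W"
    hence E: "{r\<in>supp W. r |` U = t} = {}" by auto
    have "marg W U t = 0" unfolding marg_def E by simp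
    thus False using t unfolding supp_def by simp
  qed
qed

lemma krel_marg:
  assumes "is_krel Dom X W" "U \<subseteq> X"
  shows "is_krel Dom U (marg W U)"
  unfolding is_krel_def
proof (intro conjI allI impI)
  have "finite X" using assms(1) unfolding is_krel_def by simp
  thus "finite U" by (rule finite_subset[OF assms(2)])
  have "finite (supp W)" using assms(1) unfolding is_krel_def by simp
  thus "finite (supp (marg W U))"
    by (rule finite_subset[OF supp_marg finite_imageI])
  fix t assume nt: "\<not> is_tuple Dom U t"
  have E: "{r\<in>supp W. r |` U = t} = {}"
  proof (rule ccontr)
    assume "{r\<in>supp W. r |` U = t} \<noteq> {}"
    then obtain r where r: "r \<in> supp W" "r |` U = t" by auto
    have "W r \<noteq> 0" using r(1) unfolding supp_def by simp
    hence "is_tuple Dom X r" using assms(1) unfolding is_krel_def by blast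
    hence "is_tuple Dom U (r |` U)" by (rule tuple_restrict[OF _ assms(2)])
    thus False using r(2) nt by simp
  qed
  show "marg W U t = 0" unfolding marg_def E by simp
qed

lemma marg_trans:
  assumes "finite (supp W)" "Y \<subseteq> U"
  shows "marg (marg W U) Y = marg W Y"
proof
  fix t
  let ?g = "\<lambda>r. r |` U"
  let ?T = "{s \<in> ?g ` supp W. s |` Y = t}"
  let ?S = "{r\<in>supp W. r |` Y = t}"
  have fT: "finite (?g ` supp W)" using assms by simp
  have "marg (marg W U) Y t = (\<Sum>s\<in>?T. marg W U s)"
    by (rule marg_alt[OF fT supp_marg])
  also have "\<dots> = (\<Sum>s\<in>?T. \<Sum>r\<in>{x\<in>?S. ?g x = s}. W r)"
  proof (rule sum.cong[OF refl])
    fix s assume s: "s \<in> ?T"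
    have "{r\<in>supp W. r |` U = s} = {x\<in>?S. ?g x = s}"
    proof -
      have "\<And>r. r |` U = s \<Longrightarrow> r |` Y = t"
      proof -
        fix r assume "r |` U = s"
        hence "s |` Y = r |` (U \<inter> Y)" using restrict_restrict[of r U Y] by simp
        also have "U \<inter> Y = Y" by (rule Int_absorb1[OF assms(2)])
        finally have "r |` Y = s |` Y" by simp
        thus "r |` Y = t" using s by simp
      qed
      thus ?thesis by auto
    qed
    thus "marg W U s = (\<Sum>r\<in>{x\<in>?S. ?g x = s}. W r)" unfolding marg_def by simp
  qed
  also have "\<dots> = (\<Sum>r\<in>?S. W r)"
  proof (rule sum.group)
    show "finite ?S" using assms by simp
    show "finite ?T" using fT by simp
    show "?g ` ?S \<subseteq> ?T"
      using assms(2) by (auto simp: restrict_restrict Int_absorb1)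
  qed
  also have "\<dots> = marg W Y t" unfolding marg_def by simp
  finally show "marg (marg W U) Y t = marg W Y t" .
qed

lemma hom_sum:
  assumes "h 0 = 0" "\<forall>x y. h (x + y) = h x + h y"
  shows "h (sum f S) = (\<Sum>x\<in>S. h (f x))"
proof (cases "finite S")
  case True thus ?thesis by (induction S rule: finite_induct) (use assms in auto)
qed (use assms in auto)

lemma supp_comp:
  assumes "h 0 = 0" shows "supp (\<lambda>t. h (W t)) \<subseteq> supp W"
  using assms unfolding supp_def by auto

lemma marg_comp:
  assumes "h 0 = 0" "\<forall>x y. h (x + y) = h x + h y" "finite (supp W)"
  shows "marg (\<lambda>t. h (W t)) Y t = h (marg W Y t)"
proof -
  have "marg (\<lambda>t. h (W t)) Y t = (\<Sum>r\<in>{r\<in>supp W. r |` Y = t}. h (W r))"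
    by (rule marg_alt[OF assms(3) supp_comp[of h W, OF assms(1)]])
  also have "\<dots> = h (marg W Y t)" unfolding marg_def by (rule hom_sum[symmetric, OF assms(1,2)])
  finally show ?thesis .
qed

theorem proposition42:
  fixes Dom :: "'a \<Rightarrow> 'v set" and m :: nat and X :: "nat \<Rightarrow> 'a set"
    and R :: "nat \<Rightarrow> ('a, 'v) tup \<Rightarrow> 'k::comm_monoid_add"
  assumes "positive_monoid TYPE('k)"
    and "\<And>i. i < m \<Longrightarrow> is_krel Dom (X i) (R i)"
  shows "(globally_consistent Dom m X R \<longrightarrow>
            (\<forall>h :: 'b::comm_monoid_add \<Rightarrow> 'k. is_cover h \<longrightarrow> globally_consistent_upto h Dom m X R))
       \<and> ((\<forall>h :: 'k \<Rightarrow> 'k. is_cover h \<longrightarrow> globally_consistent_upto h Dom m X R) \<longrightarrow>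
            (\<exists>h :: 'k \<Rightarrow> 'k. is_cover h \<and> globally_consistent_upto h Dom m X R))
       \<and> ((\<exists>h :: 'c::comm_monoid_add \<Rightarrow> 'k. is_cover h \<and> globally_consistent_upto h Dom m X R) \<longrightarrow>
            globally_consistent Dom m X R)"
proof (intro conjI impI allI)
  fix h :: "'b::comm_monoid_add \<Rightarrow> 'k"
  assume gc: "globally_consistent Dom m X R" and cov: "is_cover h"
  have h0: "h 0 = 0" and hadd: "\<forall>x y. h (x + y) = h x + h y" and sj: "surj h"
    using cov unfolding is_cover_def by auto
  let ?XA = "\<Union>j<m. X j"
  have gc': "\<forall>q \<le> m. \<forall>\<iota> :: nat \<Rightarrow> nat. (\<forall>j<q. \<iota> j < m) \<longrightarrow>
        (\<exists>W. is_krel Dom (\<Union>j<q. X (\<iota> j)) W \<and> (\<forall>j<q. marg W (X (\<iota> j)) = R (\<iota> j)))"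
    using gc unfolding globally_consistent_def kwise_consistent_def .
  have "\<exists>W. is_krel Dom (\<Union>j<m. X (id j)) W \<and> (\<forall>j<m. marg W (X (id j)) = R (id j))"
    using gc'[rule_format, OF le_refl, of id] by simp
  then obtain W where W: "is_krel Dom ?XA W" and Wm: "\<And>j. j < m \<Longrightarrow> marg W (X j) = R j"
    by auto
  define Ws where "Ws t = (if W t = 0 then 0 else inv h (W t))" for t
  have hWs: "h (Ws t) = W t" for t
    unfolding Ws_def using h0 sj by (simp add: surj_f_inv_f)
  have sWs: "supp Ws \<subseteq> supp W" unfolding supp_def Ws_def by auto
  have fW: "finite (supp W)" using W unfolding is_krel_def by auto
  have fWs: "finite (supp Ws)" using finite_subset[OF sWs fW] .
  have Wsk: "is_krel Dom ?XA Ws"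
    using W sWs fWs unfolding is_krel_def Ws_def by auto
  define Rs where "Rs i = marg Ws (X i)" for i
  have hRs: "h (Rs i t) = R i t" if "i < m" for i t
  proof -
    have "h (Rs i t) = marg (\<lambda>t. h (Ws t)) (X i) t"
      unfolding Rs_def by (rule marg_comp[symmetric, OF h0 hadd fWs])
    also have "\<dots> = marg W (X i) t" using hWs by simp
    finally show ?thesis using Wm[OF that] by simp
  qed
  show "globally_consistent_upto h Dom m X R"
    unfolding globally_consistent_upto_def
  proof (intro exI conjI allI impI)
    fix i assume i: "i < m"
    show "is_lift h Dom (X i) (R i) (Rs i)"
      unfolding is_lift_def Rs_def
      using krel_marg[OF Wsk] i hRs[OF i] unfolding Rs_def by auto
  next
    show "globally_consistent Dom m X Rs"
      unfolding globally_consistent_def kwise_consistent_def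
    proof (intro allI impI)
      fix q and \<iota> :: "nat \<Rightarrow> nat" assume "q \<le> m" and io: "\<forall>j<q. \<iota> j < m"
      let ?U = "\<Union>j<q. X (\<iota> j)"
      have UX: "?U \<subseteq> ?XA" using io by auto
      show "\<exists>W. is_krel Dom ?U W \<and> (\<forall>j<q. marg W (X (\<iota> j)) = Rs (\<iota> j))"
      proof (intro exI conjI allI impI)
        show "is_krel Dom ?U (marg Ws ?U)" by (rule krel_marg[OF Wsk UX])
        fix j assume "j < q"
        hence "X (\<iota> j) \<subseteq> ?U" by auto
        thus "marg (marg Ws ?U) (X (\<iota> j)) = Rs (\<iota> j)"
          unfolding Rs_def by (rule marg_trans[OF fWs])
      qed
    qed
  qed
next
  assume H: "\<forall>h :: 'k \<Rightarrow> 'k. is_cover h \<longrightarrow> globally_consistent_upto h Dom m X R"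
  have "is_cover (id :: 'k \<Rightarrow> 'k)" using assms(1) unfolding is_cover_def by auto
  thus "\<exists>h :: 'k \<Rightarrow> 'k. is_cover h \<and> globally_consistent_upto h Dom m X R"
    using H by blast
next
  assume "\<exists>h :: 'c::comm_monoid_add \<Rightarrow> 'k. is_cover h \<and> globally_consistent_upto h Dom m X R"
  then obtain h :: "'c \<Rightarrow> 'k" and Rs where cov: "is_cover h"
    and lift: "\<And>i. i < m \<Longrightarrow> is_lift h Dom (X i) (R i) (Rs i)"
    and gcs: "globally_consistent Dom m X Rs"
    unfolding globally_consistent_upto_def by blast
  have h0: "h 0 = 0" and hadd: "\<forall>x y. h (x + y) = h x + h y"
    using cov unfolding is_cover_def by auto
  have RR: "h (Rs i t) = R i t" if "i < m" for i t
  proof (cases "is_tuple Dom (X i) t")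
    case True thus ?thesis using lift[OF that] unfolding is_lift_def by auto
  next
    case False
    hence "Rs i t = 0" "R i t = 0"
      using lift[OF that] assms(2)[OF that] unfolding is_lift_def is_krel_def by auto
    thus ?thesis using h0 by simp
  qed
  show "globally_consistent Dom m X R"
    unfolding globally_consistent_def kwise_consistent_def
  proof (intro allI impI)
    fix q and \<iota> :: "nat \<Rightarrow> nat" assume q: "q \<le> m" and io: "\<forall>j<q. \<iota> j < m"
    let ?U = "\<Union>j<q. X (\<iota> j)"
    obtain Ws where Ws: "is_krel Dom ?U Ws" and Wm: "\<forall>j<q. marg Ws (X (\<iota> j)) = Rs (\<iota> j)"
      using gcs q io unfolding globally_consistent_def kwise_consistent_def by blast
    have fWs: "finite (supp Ws)" using Ws unfolding is_krel_def by auto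
    show "\<exists>W. is_krel Dom ?U W \<and> (\<forall>j<q. marg W (X (\<iota> j)) = R (\<iota> j))"
    proof (intro exI conjI allI impI)
      show "is_krel Dom ?U (\<lambda>t. h (Ws t))"
        using Ws h0 finite_subset[OF supp_comp[of h Ws, OF h0] fWs] unfolding is_krel_def by auto
      fix j assume j: "j < q"
      show "marg (\<lambda>t. h (Ws t)) (X (\<iota> j)) = R (\<iota> j)"
      proof
        fix t
        show "marg (\<lambda>t. h (Ws t)) (X (\<iota> j)) t = R (\<iota> j) t"
          using marg_comp[OF h0 hadd fWs] Wm j io RR by auto
      qed
    qed
  qed
qed

end
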